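(* Let $G$ be a group, $E$ a real Banach space, and $f\colon G\to E$ such that $\|f(xy)+f(xy^{-1})-2f(x)\|\le c$ for all $x,y\in G$, where $c>0$. Then the function $\hat f(x)=\lim_{k\to\infty}\frac{1}{2^k}f(x^{2^k})$ is well-defined, it is a $(G;E)$-pseudo-Jensen function, and $\|\hat f(x)-f(x)\|\le c+\|f(1)\|$ for all $x\in G$.
   Context: A function $g\colon G\to E$ is $(G;E)$-pseudo-Jensen if there is $d>0$ with $\|g(xy)+g(xy^{-1})-2g(x)\|\le d$ for all $x,y\in G$, and $g(x^n)=ng(x)$ for all $x\in G$, $n\in\mathbb{Z}$. *)

theory Defs
  imports "HOL-Analysis.Analysis" "HOL-Algebra.Group"
begin

definition pseudo_jensen ::
  "('a, 'b) monoid_scheme \<Rightarrow> ('a \<Rightarrow> 'e::real_normed_vector) \<Rightarrow> bool" where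
  "pseudo_jensen G g \<longleftrightarrow>
     (\<exists>d>0. \<forall>x\<in>carrier G. \<forall>y\<in>carrier G.
        norm (g (x \<otimes>\<^bsub>G\<^esub> y) + g (x \<otimes>\<^bsub>G\<^esub> inv\<^bsub>G\<^esub> y) - 2 *\<^sub>R g x) \<le> d) \<and>
     (\<forall>x\<in>carrier G. \<forall>n::int. g (x [^]\<^bsub>G\<^esub> n) = of_int n *\<^sub>R g x)"

end

theory Submission
  imports Defs
begin

lemma (in group) main:
  fixes f :: "'a \<Rightarrow> 'e::banach" and c :: real
  assumes "c > 0"
    and "\<forall>x\<in>carrier G. \<forall>y\<in>carrier G.
           norm (f (x \<otimes>\<^bsub>G\<^esub> y) + f (x \<otimes>\<^bsub>G\<^esub> inv\<^bsub>G\<^esub> y) - 2 *\<^sub>R f x) \<le> c"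
  shows "(\<forall>x\<in>carrier G. convergent (\<lambda>k::nat. (1 / 2 ^ k) *\<^sub>R f (x [^]\<^bsub>G\<^esub> ((2::nat) ^ k))))
       \<and> pseudo_jensen G (\<lambda>x. lim (\<lambda>k::nat. (1 / 2 ^ k) *\<^sub>R f (x [^]\<^bsub>G\<^esub> ((2::nat) ^ k))))
       \<and> (\<forall>x\<in>carrier G.
            norm (lim (\<lambda>k::nat. (1 / 2 ^ k) *\<^sub>R f (x [^]\<^bsub>G\<^esub> ((2::nat) ^ k))) - f x)
              \<le> c + norm (f \<one>\<^bsub>G\<^esub>))"
proof -
  define C where "C = c + norm (f \<one>)"
  have C0: "C \<ge> 0" unfolding C_def using assms(1) by (simp add: add_nonneg_nonneg)
  define a where "a = (\<lambda>x (k::nat). (1 / 2 ^ k) *\<^sub>R f (x [^] ((2::nat) ^ k)))"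
  define F where "F = (\<lambda>x. lim (a x))"
  have J: "norm (f (x \<otimes> y) + f (x \<otimes> inv y) - 2 *\<^sub>R f x) \<le> c"
    if "x \<in> carrier G" "y \<in> carrier G" for x y using assms(2) that by blast
  have sq: "norm (f (x [^] (2::nat)) - 2 *\<^sub>R f x) \<le> C" if x: "x \<in> carrier G" for x
  proof -
    have e: "x [^] (2::nat) = x \<otimes> x" using x by (simp add: numeral_2_eq_2)
    have "f (x [^] (2::nat)) - 2 *\<^sub>R f x = (f (x \<otimes> x) + f (x \<otimes> inv x) - 2 *\<^sub>R f x) - f \<one>"
      using x e by simp
    also have "norm \<dots> \<le> norm (f (x \<otimes> x) + f (x \<otimes> inv x) - 2 *\<^sub>R f x) + norm (f \<one>)"
      by (rule norm_triangle_ineq4)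
    also have "\<dots> \<le> C" using J[OF x x] unfolding C_def by simp
    finally show ?thesis .
  qed
  have diff: "norm (a x (Suc k) - a x k) \<le> C / 2 ^ Suc k" if x: "x \<in> carrier G" for x k
  proof -
    define y where "y = x [^] ((2::nat) ^ k)"
    have y: "y \<in> carrier G" using x by (simp add: y_def)
    have e: "x [^] ((2::nat) ^ Suc k) = y [^] (2::nat)"
      using x by (simp add: y_def nat_pow_pow mult.commute)
    have "a x (Suc k) - a x k = (1 / 2 ^ Suc k) *\<^sub>R (f (y [^] (2::nat)) - 2 *\<^sub>R f y)"
      unfolding a_def e y_def[symmetric] by (simp add: scaleR_diff_right)
    then have "norm (a x (Suc k) - a x k) = (1 / 2 ^ Suc k) * norm (f (y [^] (2::nat)) - 2 *\<^sub>R f y)"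
      by simp
    also have "\<dots> \<le> (1 / 2 ^ Suc k) * C" using sq[OF y] by (intro mult_left_mono) auto
    finally show ?thesis by simp
  qed
  have conv: "a x \<longlonglongrightarrow> F x" if x: "x \<in> carrier G" for x
  proof -
    define d where "d = (\<lambda>i. a x (Suc i) - a x i)"
    have "summable (\<lambda>i. C * (1/2) ^ i)" by (intro summable_mult summable_geometric) simp
    moreover have "norm (d i) \<le> C * (1/2) ^ i" for i
    proof -
      have "norm (d i) \<le> C / 2 ^ Suc i" unfolding d_def by (rule diff[OF x])
      also have "\<dots> \<le> C * (1/2) ^ i" using C0 by (simp add: power_one_over divide_le_eq)
      finally show ?thesis .
    qed
    ultimately have "summable d"
      by (metis (no_types, lifting) summable_comparison_test)
    then have "(\<lambda>n. a x 0 + (\<Sum>i<n. d i)) \<longlonglongrightarrow> a x 0 + suminf d"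
      by (intro tendsto_add tendsto_const summable_LIMSEQ)
    moreover have "a x 0 + (\<Sum>i<n. d i) = a x n" for n
      unfolding d_def sum_lessThan_telescope by simp
    ultimately have "a x \<longlonglongrightarrow> a x 0 + suminf d" by simp
    then have "convergent (a x)" by (auto simp: convergent_def)
    then show ?thesis unfolding F_def by (simp add: convergent_LIMSEQ_iff)
  qed
  have bnd: "norm (F x - f x) \<le> C" if x: "x \<in> carrier G" for x
  proof -
    have a0: "a x 0 = f x" using x by (simp add: a_def)
    have ind: "norm (a x k - f x) \<le> C - C / 2 ^ k" for k
    proof (induction k)
      case 0 then show ?case by (simp add: a0)
    next
      case (Suc k)
      have "norm (a x (Suc k) - f x) \<le> norm (a x (Suc k) - a x k) + norm (a x k - f x)"
        by (rule norm_diff_triangle_le[of _ "a x k"]) simp_all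
      also have "\<dots> \<le> C / 2 ^ Suc k + (C - C / 2 ^ k)" using diff[OF x, of k] Suc by simp
      also have "\<dots> = C - C / 2 ^ Suc k" by (simp add: field_simps)
      finally show ?case .
    qed
    have "(\<lambda>k. norm (a x k - f x)) \<longlonglongrightarrow> norm (F x - f x)"
      by (intro tendsto_norm tendsto_diff conv[OF x] tendsto_const)
    moreover have "norm (a x k - f x) \<le> C" for k
      using ind[of k] C0 by (smt (verit) divide_nonneg_pos zero_less_power)
    ultimately show ?thesis by (intro LIMSEQ_le_const2) auto
  qed
  have F1: "F \<one> = 0"
  proof -
    have "(\<lambda>k. (1/2) ^ k *\<^sub>R f \<one>) \<longlonglongrightarrow> 0 *\<^sub>R f \<one>"
      by (intro tendsto_scaleR LIMSEQ_realpow_zero tendsto_const) auto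
    moreover have "a \<one> = (\<lambda>k. (1/2) ^ k *\<^sub>R f \<one>)"
      by (simp add: a_def fun_eq_iff power_one_over)
    ultimately have "a \<one> \<longlonglongrightarrow> 0" by simp
    with conv[of \<one>] show ?thesis using LIMSEQ_unique by auto
  qed
  have jen: "F (x [^] (m + 1)) + F (x [^] (m - 1)) = 2 *\<^sub>R F (x [^] m)"
    if x: "x \<in> carrier G" for x and m :: int
  proof -
    define s where "s = (\<lambda>k. a (x [^] (m + 1)) k + a (x [^] (m - 1)) k - 2 *\<^sub>R a (x [^] m) k)"
    have s_lim: "s \<longlonglongrightarrow> F (x [^] (m + 1)) + F (x [^] (m - 1)) - 2 *\<^sub>R F (x [^] m)"
      unfolding s_def using x by (intro tendsto_intros conv) auto
    have s_bnd: "norm (s k) \<le> c * (1/2) ^ k" for k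
    proof -
      define K :: int where "K = int (2 ^ k)"
      define u where "u = x [^] (m * K)"
      define v where "v = x [^] K"
      have u: "u \<in> carrier G" and v: "v \<in> carrier G" using x by (auto simp: u_def v_def)
      have p: "y [^] ((2::nat) ^ k) = y [^] K" for y
        unfolding K_def by (rule int_pow_int[symmetric])
      have e1: "(x [^] (m + 1)) [^] ((2::nat) ^ k) = u \<otimes> v"
        unfolding p u_def v_def using x by (simp add: int_pow_pow int_pow_mult[symmetric] distrib_right)
      have e2: "(x [^] (m - 1)) [^] ((2::nat) ^ k) = u \<otimes> inv v"
        unfolding p u_def v_def using x by (simp add: int_pow_pow int_pow_diff[symmetric] left_diff_distrib)
      have e3: "(x [^] m) [^] ((2::nat) ^ k) = u"
        unfolding p u_def using x by (simp add: int_pow_pow)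
      have "s k = (1 / 2 ^ k) *\<^sub>R (f (u \<otimes> v) + f (u \<otimes> inv v) - 2 *\<^sub>R f u)"
        unfolding s_def a_def e1 e2 e3 by (simp add: scaleR_diff_right scaleR_add_right)
      then have "norm (s k) = (1 / 2 ^ k) * norm (f (u \<otimes> v) + f (u \<otimes> inv v) - 2 *\<^sub>R f u)"
        by simp
      also have "\<dots> \<le> (1 / 2 ^ k) * c" using J[OF u v] by (intro mult_left_mono) auto
      finally show ?thesis by (simp add: power_one_over mult.commute)
    qed
    have "(\<lambda>k. c * (1/2) ^ k) \<longlonglongrightarrow> c * 0"
      by (intro tendsto_mult tendsto_const LIMSEQ_realpow_zero) auto
    then have "norm (F (x [^] (m + 1)) + F (x [^] (m - 1)) - 2 *\<^sub>R F (x [^] m)) \<le> 0"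
      using s_bnd by (intro LIMSEQ_le[OF tendsto_norm[OF s_lim]]) auto
    then show ?thesis by simp
  qed
  have lin: "F (x [^] n) = of_int n *\<^sub>R F x" if x: "x \<in> carrier G" for x and n :: int
  proof -
    have "F (x [^] n) = of_int n *\<^sub>R F x \<and> F (x [^] (n + 1)) = of_int (n + 1) *\<^sub>R F x"
    proof (induction n rule: int_induct[where k=0])
      case base
      then show ?case using x F1 by simp
    next
      case (step1 i)
      have "F (x [^] (i + 1 + 1)) + F (x [^] (i + 1 - 1)) = 2 *\<^sub>R F (x [^] (i + 1))"
        by (rule jen[OF x])
      then have "F (x [^] (i + 1 + 1)) = 2 *\<^sub>R F (x [^] (i + 1)) - F (x [^] i)"
        by (simp add: algebra_simps)
      also have "\<dots> = 2 *\<^sub>R (of_int (i + 1) *\<^sub>R F x) - of_int i *\<^sub>R F x"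
        using step1 by simp
      also have "\<dots> = (2 * of_int (i + 1) - of_int i) *\<^sub>R F x"
        by (simp only: scaleR_scaleR scaleR_diff_left)
      also have "2 * of_int (i + 1) - of_int i = (of_int (i + 1 + 1) :: real)" by simp
      finally show ?case using step1 by simp
    next
      case (step2 i)
      have "F (x [^] (i + 1)) + F (x [^] (i - 1)) = 2 *\<^sub>R F (x [^] i)"
        by (rule jen[OF x])
      then have "F (x [^] (i - 1)) = 2 *\<^sub>R F (x [^] i) - F (x [^] (i + 1))"
        by (simp add: algebra_simps)
      also have "\<dots> = 2 *\<^sub>R (of_int i *\<^sub>R F x) - of_int (i + 1) *\<^sub>R F x"
        using step2 by simp
      also have "\<dots> = (2 * of_int i - of_int (i + 1)) *\<^sub>R F x"
        by (simp only: scaleR_scaleR scaleR_diff_left)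
      also have "2 * of_int i - of_int (i + 1) = (of_int (i - 1) :: real)" by simp
      finally show ?case using step2 by simp
    qed
    then show ?thesis by simp
  qed
  have PJ: "pseudo_jensen G F"
    unfolding pseudo_jensen_def
  proof (intro conjI ballI allI)
    show "F (x [^] n) = of_int n *\<^sub>R F x" if "x \<in> carrier G" for x and n :: int
      using lin that by blast
    show "\<exists>d>0. \<forall>x\<in>carrier G. \<forall>y\<in>carrier G.
        norm (F (x \<otimes> y) + F (x \<otimes> inv y) - 2 *\<^sub>R F x) \<le> d"
    proof (intro exI[of _ "c + 4 * C"] conjI ballI)
      show "0 < c + 4 * C" using assms(1) C0 by simp
      fix x y assume x: "x \<in> carrier G" and y: "y \<in> carrier G"
      have "F (x \<otimes> y) + F (x \<otimes> inv y) - 2 *\<^sub>R F x =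
          (f (x \<otimes> y) + f (x \<otimes> inv y) - 2 *\<^sub>R f x) + (F (x \<otimes> y) - f (x \<otimes> y))
          + (F (x \<otimes> inv y) - f (x \<otimes> inv y)) - 2 *\<^sub>R (F x - f x)"
        by (simp add: algebra_simps)
      also have "norm \<dots> \<le> norm (f (x \<otimes> y) + f (x \<otimes> inv y) - 2 *\<^sub>R f x) + norm (F (x \<otimes> y) - f (x \<otimes> y))
          + norm (F (x \<otimes> inv y) - f (x \<otimes> inv y)) + norm (2 *\<^sub>R (F x - f x))"
        by (intro order.trans[OF norm_triangle_ineq4] add_mono order.trans[OF norm_triangle_ineq] order_refl)
      also have "\<dots> \<le> c + C + C + 2 * C"
        using J[OF x y] bnd[of "x \<otimes> y"] bnd[of "x \<otimes> inv y"] bnd[OF x] x y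
        by (intro add_mono) auto
      finally show "norm (F (x \<otimes> y) + F (x \<otimes> inv y) - 2 *\<^sub>R F x) \<le> c + 4 * C" by simp
    qed
  qed
  have cv: "convergent (a x)" if "x \<in> carrier G" for x
    using conv[OF that] by (auto simp: convergent_def)
  show ?thesis
    using cv PJ bnd unfolding F_def a_def C_def by blast
qed

theorem lemma2p8:
  fixes G :: "('a, 'b) monoid_scheme" and f :: "'a \<Rightarrow> 'e::banach" and c :: real
  assumes "group G"
    and "c > 0"
    and "\<forall>x\<in>carrier G. \<forall>y\<in>carrier G.
           norm (f (x \<otimes>\<^bsub>G\<^esub> y) + f (x \<otimes>\<^bsub>G\<^esub> inv\<^bsub>G\<^esub> y) - 2 *\<^sub>R f x) \<le> c"
  shows "(\<forall>x\<in>carrier G. convergent (\<lambda>k::nat. (1 / 2 ^ k) *\<^sub>R f (x [^]\<^bsub>G\<^esub> ((2::nat) ^ k))))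
       \<and> pseudo_jensen G (\<lambda>x. lim (\<lambda>k::nat. (1 / 2 ^ k) *\<^sub>R f (x [^]\<^bsub>G\<^esub> ((2::nat) ^ k))))
       \<and> (\<forall>x\<in>carrier G.
            norm (lim (\<lambda>k::nat. (1 / 2 ^ k) *\<^sub>R f (x [^]\<^bsub>G\<^esub> ((2::nat) ^ k))) - f x)
              \<le> c + norm (f \<one>\<^bsub>G\<^esub>))"
  using group.main[of G c f] assms by blast

end
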